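(* Let $x,y$ be sequences, $n=|x|+|y|\ge 2$, and let $0<t\le 1/4$. Let $L$ be a longest common subsequence of $x$ and $y$ with $|L|=n^{3/4+t}$. Let $f$ be a power of $2$ with $1\le f<n^{1/4}$ such that $L'=\mathsf{Project}(L,\Sigma_{[f..2f)}(L))$ satisfies $|L'|\ge |L|/(2\log_2 n)$. Let $x'=\mathsf{Project}(x,\Sigma_{[f..n]}(x))$, and let $\pi$ be a repetition-free sequence whose set of symbols is exactly the set of symbols occurring in $x'$. Let $R$ be a subsequence of $L'$ containing exactly one occurrence of each symbol occurring in $L'$, and assume $|\mathsf{LIS}_\pi(R)|<n^t/\log_2 n$. Consider any run of the peeling process on $x'$: $x^0=x'$, and while $x^i$ is nonempty, $\pi^i$ is any subsequence of $x^i$ that is strictly decreasing with respect to $<_\pi$ with $|\pi^i|\ge|\mathsf{LDS}_\pi(x^i)|/2$, and $x^{i+1}=\mathsf{Exclude}(x^i,\pi^i)$. Then there is an iteration $i$ of this process with $|\mathsf{LIS}_{\pi^i}(y)|\ge n^t/200$.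
   Context: For a symbol $\sigma$, $\#_\sigma(x)$ is the number of occurrences of $\sigma$ in $x$; $\Sigma_{[a..b]}(x)=\{\sigma : a\le\#_\sigma(x)\le b\}$ and $\Sigma_{[a..b)}(x)=\{\sigma : a\le\#_\sigma(x)<b\}$. For a set $S$ of symbols (or a sequence, standing for its set of symbols), $\mathsf{Project}(x,S)$ is the subsequence of $x$ of entries whose symbol is in $S$, and $\mathsf{Exclude}(x,S)$ the subsequence of entries whose symbol is not in $S$. A sequence is repetition-free if its entries are pairwise distinct; a repetition-free $\pi=\pi_1\dots\pi_k$ defines the strict total order $\pi_i<_\pi\pi_j$ iff $i<j$. For any sequence $x$, $\mathsf{LIS}_\pi(x)$ (resp. $\mathsf{LDS}_\pi(x)$) is a longest subsequence of $\mathsf{Project}(x,\pi)$ that is strictly increasing (resp. strictly decreasing) with respect to $<_\pi$. *)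

theory Defs
  imports Complex_Main "HOL-Library.Sublist"
begin

definition sigma_cc :: "nat \<Rightarrow> nat \<Rightarrow> 'a list \<Rightarrow> 'a set" where
  "sigma_cc a b x = {s. a \<le> count_list x s \<and> count_list x s \<le> b}"

definition sigma_co :: "nat \<Rightarrow> nat \<Rightarrow> 'a list \<Rightarrow> 'a set" where
  "sigma_co a b x = {s. a \<le> count_list x s \<and> count_list x s < b}"

definition project :: "'a list \<Rightarrow> 'a set \<Rightarrow> 'a list" where
  "project x S = filter (\<lambda>c. c \<in> S) x"

definition exclude :: "'a list \<Rightarrow> 'a set \<Rightarrow> 'a list" where
  "exclude x S = filter (\<lambda>c. c \<notin> S) x"

definition lt_seq :: "'a list \<Rightarrow> 'a \<Rightarrow> 'a \<Rightarrow> bool" where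
  "lt_seq p a b = (\<exists>i j. i < j \<and> j < length p \<and> p ! i = a \<and> p ! j = b)"

definition lis_len :: "'a list \<Rightarrow> 'a list \<Rightarrow> nat" where
  "lis_len p x = Max {length s | s. subseq s (project x (set p)) \<and> sorted_wrt (lt_seq p) s}"

definition lds_len :: "'a list \<Rightarrow> 'a list \<Rightarrow> nat" where
  "lds_len p x = Max {length s | s. subseq s (project x (set p)) \<and> sorted_wrt (\<lambda>a b. lt_seq p b a) s}"

definition is_lcs :: "'a list \<Rightarrow> 'a list \<Rightarrow> 'a list \<Rightarrow> bool" where
  "is_lcs L x y = (subseq L x \<and> subseq L y \<and>
     (\<forall>M. subseq M x \<and> subseq M y \<longrightarrow> length M \<le> length L))"

end

theory Submission imports Defs begin

lemma sorted_wrt_distinct_irr: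
  "sorted_wrt r xs \<Longrightarrow> (\<And>x. \<not> r x x) \<Longrightarrow> distinct xs"
  by (induction xs) auto

lemma count_subseq: "subseq a b \<Longrightarrow> count_list a s \<le> count_list b s"
  unfolding count_list_eq_length_filter by (meson list_emb_length subseq_filter)

lemma fin_lens: "finite {length s |s. subseq s l \<and> Q s}"
proof -
  have "{length s |s. subseq s l \<and> Q s} \<subseteq> {..length l}"
    by (auto dest: list_emb_length)
  thus ?thesis by (rule finite_subset) simp
qed

lemma max_len_ge: "subseq s l \<Longrightarrow> Q s \<Longrightarrow> length s \<le> Max {length s |s. subseq s l \<and> Q s}"
  by (rule Max_ge[OF fin_lens]) blast

lemma max_len_in: "subseq s l \<Longrightarrow> Q s \<Longrightarrow> \<exists>s'. subseq s' l \<and> Q s' \<and> length s' = Max {length s |s. subseq s l \<and> Q s}"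
proof -
  assume "subseq s l" "Q s"
  hence "Max {length s |s. subseq s l \<and> Q s} \<in> {length s |s. subseq s l \<and> Q s}"
    by (intro Max_in[OF fin_lens]) blast
  thus ?thesis by auto
qed

lemma lt_irr: "distinct p \<Longrightarrow> \<not> lt_seq p a a"
  unfolding lt_seq_def by (metis less_trans nat_neq_iff nth_eq_iff_index_eq)

lemma lt_set: "lt_seq p a b \<Longrightarrow> a \<in> set p \<and> b \<in> set p"
  unfolding lt_seq_def by auto

lemma lt_trans: "distinct p \<Longrightarrow> lt_seq p a b \<Longrightarrow> lt_seq p b c \<Longrightarrow> lt_seq p a c"
  unfolding lt_seq_def by (metis less_trans nth_eq_iff_index_eq)

lemma lt_asym: "distinct p \<Longrightarrow> lt_seq p a b \<Longrightarrow> \<not> lt_seq p b a"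
  using lt_trans lt_irr by metis

lemma lt_total: "a \<in> set p \<Longrightarrow> b \<in> set p \<Longrightarrow> a \<noteq> b \<Longrightarrow> lt_seq p a b \<or> lt_seq p b a"
  unfolding lt_seq_def in_set_conv_nth by (metis nat_neq_iff)

lemma sorted_last: "sorted_wrt r s \<Longrightarrow> s \<noteq> [] \<Longrightarrow> y \<in> set s \<Longrightarrow> y = last s \<or> r y (last s)"
proof -
  assume a: "sorted_wrt r s" "s \<noteq> []" "y \<in> set s"
  have e: "s = butlast s @ [last s]" using a(2) by simp
  have "sorted_wrt r (butlast s @ [last s])" using a(1) e by metis
  hence "\<forall>z\<in>set (butlast s). r z (last s)" by (simp add: sorted_wrt_append)
  moreover have "y \<in> set (butlast s) \<or> y = last s" using a(3) e
    by (metis Un_iff empty_iff empty_set set_ConsD set_append)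
  ultimately show ?thesis by blast
qed


lemma ES:
  assumes dp: "distinct p" and dR: "distinct R" and sR: "set R \<subseteq> set p"
  shows "\<exists>D. subseq D R \<and> sorted_wrt (\<lambda>a b. lt_seq p b a) D \<and> length R \<le> lis_len p R * length D"
proof (cases "R = []")
  case True thus ?thesis by (intro exI[of _ "[]"]) simp
next
  case False
  define N where "N = length R"
  define lt where "lt = lt_seq p"
  define Q where "Q i = (\<lambda>s. sorted_wrt lt s \<and> s \<noteq> [] \<and> last s = R!i)" for i
  define E where "E i = Max {length s |s. subseq s (take (Suc i) R) \<and> Q i s}" for i
  define a where "a = lis_len p R"
  have projR: "project R (set p) = R" unfolding project_def using sR by (auto intro: filter_True)
  have wit: "subseq [R!i] (take (Suc i) R) \<and> Q i [R!i]" if iN: "i < N" for i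
    using that unfolding N_def Q_def by (auto simp: subseq_singleton_left in_set_conv_nth intro!: exI[of _ i])
  have E1: "1 \<le> E i" if iN: "i < N" for i
    using max_len_ge[where Q="Q i", OF conjunct1[OF wit[OF iN]] conjunct2[OF wit[OF iN]]] unfolding E_def by simp
  have Ea: "E i \<le> a" if iN: "i < N" for i
  proof -
    obtain s where s: "subseq s (take (Suc i) R)" "sorted_wrt lt s" "s \<noteq> []" "last s = R!i" "length s = E i"
      using max_len_in[where Q="Q i", OF conjunct1[OF wit[OF iN]] conjunct2[OF wit[OF iN]]] unfolding E_def Q_def by blast
    have "subseq s (project R (set p))" unfolding projR
      using s(1) prefix_imp_subseq[OF take_is_prefix] subseq_order.order_trans by blast
    from max_len_ge[OF this, of "sorted_wrt (lt_seq p)"] s show ?thesis unfolding a_def lis_len_def lt_def by simp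
  qed
  have Einc: "E i < E j" if ij: "i < j" "j < N" "lt (R!i) (R!j)" for i j
  proof -
    have iN: "i < N" using ij by simp
    obtain s where s: "subseq s (take (Suc i) R)" "sorted_wrt lt s" "s \<noteq> []" "last s = R!i" "length s = E i"
      using max_len_in[where Q="Q i", OF conjunct1[OF wit[OF iN]] conjunct2[OF wit[OF iN]]] unfolding E_def Q_def by blast
    have tj: "take (Suc j) R = take j R @ [R!j]" using ij unfolding N_def by (simp add: take_Suc_conv_app_nth)
    have "take (Suc i) R = take (Suc i) (take j R)" using ij by (simp add: min_def)
    hence "subseq (take (Suc i) R) (take j R)"
      by (metis prefix_imp_subseq take_is_prefix)
    hence "subseq s (take j R)" using s(1) subseq_order.order_trans by blast
    hence sub: "subseq (s @ [R!j]) (take (Suc j) R)" unfolding tj by (simp add: list_emb_append_mono)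
    have "\<forall>y\<in>set s. lt y (R!j)"
    proof
      fix y assume "y \<in> set s"
      from sorted_last[OF s(2) s(3) this] s(4) ij(3) show "lt y (R!j)"
        by (elim disjE) (auto simp: lt_def intro: lt_trans[OF dp])
    qed
    hence "sorted_wrt lt (s @ [R!j])" using s(2) by (simp add: sorted_wrt_append)
    from max_len_ge[where Q="Q j", OF sub] this
    have "length (s @ [R!j]) \<le> E j" unfolding E_def Q_def by simp
    thus ?thesis using s(5) by simp
  qed
  have Edec: "lt (R!j) (R!i)" if "i < j" "j < N" "E i = E j" for i j
  proof -
    have "R!i \<noteq> R!j" using that dR unfolding N_def by (simp add: nth_eq_iff_index_eq)
    moreover have "R!i \<in> set p" "R!j \<in> set p" using that sR unfolding N_def by auto
    ultimately have "lt (R!i) (R!j) \<or> lt (R!j) (R!i)" unfolding lt_def using lt_total[of "R!i" p "R!j"] by blast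
    moreover have "\<not> lt (R!i) (R!j)" using Einc[OF that(1,2)] that(3) by auto
    ultimately show ?thesis by blast
  qed
  define C where "C v = card {i. i < N \<and> E i = v}" for v
  have "\<exists>v. N \<le> a * C v"
  proof (rule ccontr)
    assume "\<not> ?thesis"
    hence lt1: "a * C v < N" for v by (simp add: not_le)
    have "{..<N} \<subseteq> (\<Union>v\<in>{1..a}. {i. i < N \<and> E i = v})" using E1 Ea by auto
    hence "card {..<N} \<le> card (\<Union>v\<in>{1..a}. {i. i < N \<and> E i = v})"
      by (intro card_mono) auto
    hence "N \<le> card (\<Union>v\<in>{1..a}. {i. i < N \<and> E i = v})" by simp
    also have "\<dots> \<le> (\<Sum>v\<in>{1..a}. C v)" unfolding C_def by (rule card_UN_le) simp
    finally have NS: "N \<le> (\<Sum>v\<in>{1..a}. C v)" .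
    have "a \<ge> 1" using E1 Ea False unfolding N_def by (meson dual_order.trans length_greater_0_conv)
    hence "(\<Sum>v\<in>{1..a}. a * C v) < (\<Sum>v\<in>{1..a}. N)" using lt1 by (intro sum_strict_mono) auto
    hence "a * (\<Sum>v\<in>{1..a}. C v) < a * N" by (simp add: sum_distrib_left)
    hence "(\<Sum>v\<in>{1..a}. C v) < N" by simp
    thus False using NS by simp
  qed
  then obtain v where v: "N \<le> a * C v" by blast
  define I where "I = filter (\<lambda>i. E i = v) [0..<N]"
  define D where "D = map (\<lambda>i. R!i) I"
  have "subseq D (map (\<lambda>i. R!i) [0..<N])" unfolding D_def I_def by (intro subseq_map) simp
  moreover have "map (\<lambda>i. R!i) [0..<N] = R" unfolding N_def by (simp add: map_nth)
  ultimately have D1: "subseq D R" by simp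
  have "sorted_wrt (<) I" unfolding I_def by (intro sorted_wrt_filter) simp
  hence "sorted_wrt (\<lambda>i j. lt (R!j) (R!i)) I"
    by (rule sorted_wrt_mono_rel[rotated]) (auto simp: I_def intro: Edec)
  hence D2: "sorted_wrt (\<lambda>a b. lt_seq p b a) D" unfolding D_def lt_def by (simp add: sorted_wrt_map)
  have "length D = C v" unfolding D_def I_def C_def by (simp add: length_filter_conv_card cong: conj_cong)
  thus ?thesis using D1 D2 v unfolding N_def a_def by auto
qed


lemma subseq_set: "subseq a b \<Longrightarrow> set a \<subseteq> set b"
  by (auto elim: list_emb_set)

lemma count_filter: "count_list (filter P xs) s = (if P s then count_list xs s else 0)"
  by (induction xs) auto

lemma sorted_lt_seq: "sorted_wrt r q \<Longrightarrow> lt_seq q u v \<Longrightarrow> r u v"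
  unfolding lt_seq_def sorted_wrt_iff_nth_less by blast

theorem mainTheorem6:
  fixes x y L L' x' p R :: "'a list" and n f :: nat and t :: real
    and xs ps :: "nat \<Rightarrow> 'a list" and k :: nat
  assumes n_def: "n = length x + length y" and n_ge: "n \<ge> 2"
    and t_pos: "0 < t" and t_le: "t \<le> 1/4"
    and lcs: "is_lcs L x y" and L_len: "real (length L) = real n powr (3/4 + t)"
    and f_pow: "\<exists>j. f = 2 ^ j" and f_ge: "1 \<le> f" and f_lt: "real f < real n powr (1/4)"
    and L'_def: "L' = project L (sigma_co f (2*f) L)"
    and L'_len: "real (length L') \<ge> real (length L) / (2 * log 2 (real n))"
    and x'_def: "x' = project x (sigma_cc f n x)"
    and p_dist: "distinct p" and p_set: "set p = set x'"
    and R_sub: "subseq R L'" and R_dist: "distinct R" and R_set: "set R = set L'"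
    and R_lis: "real (lis_len p R) < real n powr t / log 2 (real n)"
    and run0: "xs 0 = x'"
    and run_step: "\<And>i. i < k \<Longrightarrow>
        xs i \<noteq> [] \<and> subseq (ps i) (xs i) \<and> sorted_wrt (\<lambda>a b. lt_seq p b a) (ps i)
        \<and> 2 * length (ps i) \<ge> lds_len p (xs i)
        \<and> xs (Suc i) = exclude (xs i) (set (ps i))"
    and run_end: "xs k = []"
  shows "\<exists>i<k. real (lis_len (ps i) y) \<ge> real n powr t / 200"
proof (rule ccontr)
  assume neg: "\<not> ?thesis"
  define c where "c = real n powr t / 200"
  have small: "real (lis_len (ps i) y) < c" if "i < k" for i using neg that unfolding c_def by auto
  define lg where "lg = log 2 (real n)"
  have lg1: "lg \<ge> 1" unfolding lg_def using n_ge by simp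
  have NLpos: "real (length L) > 0" unfolding L_len using n_ge by simp
  have L'pos: "real (length L') > 0"
    using L'_len NLpos lg1 unfolding lg_def by (smt (verit) divide_pos_pos)
  have subL'L: "subseq L' L" by (simp add: L'_def project_def)
  have Lx: "subseq L x" and Ly: "subseq L y" using lcs unfolding is_lcs_def by auto
  have sL'x': "set L' \<subseteq> set x'"
  proof
    fix s assume s: "s \<in> set L'"
    hence fs: "f \<le> count_list L s" by (simp add: L'_def project_def sigma_co_def)
    have "count_list L s \<le> count_list x s" by (rule count_subseq[OF Lx])
    moreover have "count_list x s \<le> n" using count_le_length[of x s] n_def by simp
    ultimately have "s \<in> sigma_cc f n x" using fs by (simp add: sigma_cc_def)
    moreover have "s \<in> set x" using fs f_ge \<open>count_list L s \<le> count_list x s\<close>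
      by (metis count_notin le_trans not_one_le_zero)
    ultimately show "s \<in> set x'" by (simp add: x'_def project_def)
  qed
  have sRp: "set R \<subseteq> set p" using sL'x' R_set p_set by simp
  define a where "a = lis_len p R"
  obtain D where D: "subseq D R" "sorted_wrt (\<lambda>a b. lt_seq p b a) D" "length R \<le> a * length D"
    using ES[OF p_dist R_dist sRp] unfolding a_def by blast
  have Dy: "subseq D y" using D(1) R_sub subL'L Ly subseq_order.order_trans by blast
  have Dx: "subseq D x" using D(1) R_sub subL'L Lx subseq_order.order_trans by blast
  have irr: "\<not> (\<lambda>a b. lt_seq p b a) u u" for u using lt_irr[OF p_dist] by simp
  have Ddist: "distinct D" using sorted_wrt_distinct_irr[OF D(2) irr] .
  have sDx': "set D \<subseteq> set x'" using subseq_set[OF D(1)] R_set sL'x' by simp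
  define d where "d = length D"
  have cardD: "card (set D) = d" unfolding d_def using Ddist by (simp add: distinct_card)
  have L'R: "length L' \<le> 2 * f * length R"
  proof -
    have "length L' = (\<Sum>s\<in>set L'. count_list L' s)" by (simp add: sum_count_set)
    also have "\<dots> \<le> (\<Sum>s\<in>set L'. 2 * f)"
    proof (rule sum_mono)
      fix s assume "s \<in> set L'"
      hence "s \<in> sigma_co f (2*f) L" by (simp add: L'_def project_def)
      thus "count_list L' s \<le> 2 * f" by (simp add: L'_def project_def count_filter sigma_co_def)
    qed
    also have "\<dots> = card (set L') * (2 * f)" by simp
    also have "card (set L') = length R" using R_set R_dist by (metis distinct_card)
    finally show ?thesis by (simp add: mult.commute)
  qed
  have xs_filt: "\<exists>P. xs i = filter P x" if "i \<le> k" for i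
    using that
  proof (induction i)
    case 0 thus ?case unfolding run0 x'_def project_def by blast
  next
    case (Suc i)
    then obtain P where "xs i = filter P x" by auto
    hence "xs (Suc i) = filter (\<lambda>c. P c \<and> c \<notin> set (ps i)) x"
      using run_step[of i] Suc.prems by (simp add: exclude_def filter_filter conj_commute)
    thus ?case by blast
  qed
  have xs_filt2: "xs i = filter (\<lambda>c. c \<in> set (xs i)) x" if ik: "i \<le> k" for i
  proof -
    obtain P where P: "xs i = filter P x" using xs_filt[OF ik] by blast
    show ?thesis unfolding P by (auto intro: filter_cong)
  qed
  have set_step: "set (xs (Suc i)) = set (xs i) - set (ps i)" if "i < k" for i
    using run_step[OF that] by (auto simp: exclude_def)
  have ps_sub: "set (ps i) \<subseteq> set (xs i)" if "i < k" for i
    using run_step[OF that] subseq_set by blast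
  have xs_mono: "set (xs j) \<subseteq> set (xs i)" if "i \<le> j" "j \<le> k" for i j
    using that
  proof (induction j)
    case 0 thus ?case by simp
  next
    case (Suc j)
    show ?case
    proof (cases "i = Suc j")
      case True thus ?thesis by simp
    next
      case False
      hence "set (xs j) \<subseteq> set (xs i)" using Suc by simp
      thus ?thesis using set_step[of j] Suc.prems by auto
    qed
  qed
  have xs_x': "set (xs i) \<subseteq> set x'" if "i \<le> k" for i using xs_mono[of 0 i] that run0 by simp
  have ps_dist: "distinct (ps i)" if "i < k" for i
    using run_step[OF that] sorted_wrt_distinct_irr irr by blast
  define A where "A i = set D \<inter> set (xs i)" for i
  have A0: "card (A 0) = d" unfolding A_def run0 using sDx' cardD by (simp add: Int_absorb2)
  have Ak: "A k = {}" unfolding A_def run_end by simp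
  have lds: "card (A i) \<le> lds_len p (xs i)" if "i < k" for i
  proof -
    define W where "W = filter (\<lambda>c. c \<in> set (xs i)) D"
    have "project (xs i) (set p) = xs i" unfolding project_def using xs_x'[of i] that p_set
      by (auto intro: filter_True)
    moreover have "subseq (filter (\<lambda>c. c \<in> set (xs i)) D) (filter (\<lambda>c. c \<in> set (xs i)) x)"
      by (rule subseq_filter[OF Dx])
    hence "subseq W (xs i)" unfolding W_def using xs_filt2[of i] that by (simp only: eq_commute[of "xs i"] less_imp_le)
    ultimately have "subseq W (project (xs i) (set p))" by simp
    moreover have "sorted_wrt (\<lambda>a b. lt_seq p b a) W" unfolding W_def by (rule sorted_wrt_filter[OF D(2)])
    ultimately have "length W \<le> lds_len p (xs i)" unfolding lds_len_def by (rule max_len_ge)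
    moreover have "length W = card (A i)" unfolding W_def A_def using Ddist
      by (metis distinct_card distinct_filter set_filter Int_def Collect_conj_eq Collect_mem_eq)
    ultimately show ?thesis by simp
  qed
  have lis: "card (set D \<inter> set (ps i)) \<le> lis_len (ps i) y" if "i < k" for i
  proof -
    define W where "W = filter (\<lambda>c. c \<in> set (ps i)) D"
    have "subseq W (project y (set (ps i)))" unfolding W_def project_def using subseq_filter[OF Dy] .
    moreover have "sorted_wrt (lt_seq (ps i)) W"
    proof -
      have "sorted_wrt (\<lambda>a b. lt_seq p b a) W" unfolding W_def by (rule sorted_wrt_filter[OF D(2)])
      thus ?thesis
      proof (rule sorted_wrt_mono_rel[rotated])
        fix u v assume uv: "u \<in> set W" "v \<in> set W" "lt_seq p v u"
        have "u \<in> set (ps i)" "v \<in> set (ps i)" using uv unfolding W_def by auto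
        moreover have "u \<noteq> v" using uv(3) lt_irr[OF p_dist] by auto
        ultimately have "lt_seq (ps i) u v \<or> lt_seq (ps i) v u" using lt_total by metis
        moreover have "\<not> lt_seq (ps i) v u"
        proof
          assume "lt_seq (ps i) v u"
          hence "lt_seq p u v" using sorted_lt_seq run_step[OF that] by fastforce
          thus False using uv(3) lt_asym[OF p_dist] by blast
        qed
        ultimately show "lt_seq (ps i) u v" by blast
      qed
    qed
    ultimately have "length W \<le> lis_len (ps i) y" unfolding lis_len_def by (rule max_len_ge)
    moreover have "length W = card (set D \<inter> set (ps i))" unfolding W_def using Ddist
      by (metis distinct_card distinct_filter set_filter Int_def Collect_conj_eq Collect_mem_eq)
    ultimately show ?thesis by simp
  qed
  have tele: "card (A 0) = card (A j) + (\<Sum>i<j. card (set D \<inter> set (ps i)))" if "j \<le> k" for j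
    using that
  proof (induction j)
    case 0 thus ?case by simp
  next
    case (Suc j)
    have jk: "j < k" using Suc.prems by simp
    have eq: "A (Suc j) = A j - (set D \<inter> set (ps j))" unfolding A_def using set_step[OF jk] by auto
    have sub: "set D \<inter> set (ps j) \<subseteq> A j" unfolding A_def using ps_sub[OF jk] by auto
    have fin: "finite (A j)" unfolding A_def by simp
    have "card (A (Suc j)) = card (A j) - card (set D \<inter> set (ps j))"
      unfolding eq by (rule card_Diff_subset[OF finite_subset[OF sub fin] sub])
    moreover have "card (set D \<inter> set (ps j)) \<le> card (A j)" by (rule card_mono[OF fin sub])
    ultimately have "card (A j) = card (A (Suc j)) + card (set D \<inter> set (ps j))" by simp
    thus ?case using Suc by simp
  qed
  define m where "m = card (set x')"
  have psum: "(\<Sum>i<j. card (set (ps i))) \<le> m" if "j \<le> k" for j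
  proof -
    have "(\<Sum>i<j. card (set (ps i))) = card (\<Union>i<j. set (ps i))"
    proof (rule card_UN_disjoint[symmetric])
      show "finite {..<j}" by simp
      show "\<forall>i\<in>{..<j}. finite (set (ps i))" by simp
      show "\<forall>i\<in>{..<j}. \<forall>i'\<in>{..<j}. i \<noteq> i' \<longrightarrow> set (ps i) \<inter> set (ps i') = {}"
      proof (intro ballI impI)
        have key: "set (ps i) \<inter> set (ps i') = {}" if "i < i'" "i' < j" for i i'
        proof -
          have "set (ps i') \<subseteq> set (xs (Suc i))" using ps_sub[of i'] xs_mono[of "Suc i" i'] that \<open>j \<le> k\<close> by auto
          thus ?thesis using set_step[of i] that \<open>j \<le> k\<close> by auto
        qed
        fix i i' assume "i \<in> {..<j}" "i' \<in> {..<j}" "i \<noteq> i'"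
        thus "set (ps i) \<inter> set (ps i') = {}" using key[of i i'] key[of i' i] by (auto simp: nat_neq_iff)
      qed
    qed
    also have "\<dots> \<le> m" unfolding m_def
    proof (rule card_mono)
      show "finite (set x')" by simp
      show "(\<Union>i<j. set (ps i)) \<subseteq> set x'"
      proof (rule UN_least)
        fix i assume "i \<in> {..<j}"
        hence ik: "i < k" using \<open>j \<le> k\<close> by auto
        show "set (ps i) \<subseteq> set x'" using ps_sub[OF ik] xs_x'[of i] ik by auto
      qed
    qed
    finally show ?thesis .
  qed
  have fm: "f * m \<le> n"
  proof -
    have "f * m = (\<Sum>s\<in>set x'. f)" unfolding m_def by simp
    also have "\<dots> \<le> (\<Sum>s\<in>set x'. count_list x' s)"
      by (rule sum_mono) (auto simp: x'_def project_def count_filter sigma_cc_def)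
    also have "\<dots> = length x'" by (simp add: sum_count_set)
    also have "\<dots> \<le> length x" by (simp add: x'_def project_def)
    finally show ?thesis using n_def by simp
  qed
  have "L' \<noteq> []" using L'pos by auto
  hence Rpos: "length R > 0" using R_set by auto
  have dpos: "d > 0" using D(3) Rpos unfolding d_def by (metis gr0I mult_0_right not_le)
  define j where "j = (LEAST i. 2 * card (A i) \<le> d)"
  have jk: "j \<le> k" unfolding j_def using Ak by (intro Least_le) simp
  have Aj: "2 * card (A j) \<le> d" unfolding j_def by (rule LeastI[of _ k]) (simp add: Ak)
  have Ai: "d < 2 * card (A i)" if "i < j" for i
    using not_less_Least[of i "\<lambda>i. 2 * card (A i) \<le> d"] that unfolding j_def by simp
  have jpos: "j > 0"
  proof (rule ccontr)
    assume "\<not> j > 0"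
    hence "j = 0" by simp
    thus False using Aj A0 dpos by simp
  qed
  have jd: "j * d \<le> 4 * m"
  proof -
    have "j * d = (\<Sum>i<j. d)" by simp
    also have "\<dots> < (\<Sum>i<j. 4 * card (set (ps i)))"
    proof (rule sum_strict_mono)
      fix i assume "i \<in> {..<j}"
      hence ik: "i < k" "i < j" using jk by auto
      have "d < 2 * card (A i)" using Ai ik by simp
      also have "\<dots> \<le> 2 * lds_len p (xs i)" using lds ik by simp
      also have "\<dots> \<le> 4 * length (ps i)" using run_step[OF ik(1)] by simp
      also have "length (ps i) = card (set (ps i))" using ps_dist ik by (simp add: distinct_card)
      finally show "d < 4 * card (set (ps i))" .
    qed (use jpos in auto)
    also have "\<dots> = 4 * (\<Sum>i<j. card (set (ps i)))" by (simp add: sum_distrib_left)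
    also have "\<dots> \<le> 4 * m" using psum jk by simp
    finally show ?thesis by simp
  qed
  have dc: "real d < 2 * real j * c"
  proof -
    have "real d \<le> 2 * real (\<Sum>i<j. card (set D \<inter> set (ps i)))" using tele[OF jk] A0 Aj by linarith
    also have "real (\<Sum>i<j. card (set D \<inter> set (ps i))) = (\<Sum>i<j. real (card (set D \<inter> set (ps i))))" by simp
    also have "\<dots> < (\<Sum>i<j. c)"
    proof (rule sum_strict_mono)
      fix i assume "i \<in> {..<j}"
      hence ik: "i < k" using jk by auto
      show "real (card (set D \<inter> set (ps i))) < c" using lis[OF ik] small[OF ik] by linarith
    qed (use jpos in auto)
    also have "\<dots> = real j * c" by simp
    finally show ?thesis by simp
  qed
  define u where "u = real n powr (1/4)"
  define w where "w = real n powr t"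
  have npos: "real n > 0" using n_ge by simp
  have upos: "u > 0" unfolding u_def using npos by simp
  have wpos: "w > 0" unfolding w_def using npos by simp
  have wu: "w \<le> u" unfolding w_def u_def using t_le n_ge by (intro powr_mono) auto
  have u4: "u ^ 4 = real n" unfolding u_def using npos by (simp add: powr_power)
  have u3: "real n powr (3/4) = u ^ 3" unfolding u_def using npos by (simp add: powr_power)
  have NL: "real (length L) = u ^ 3 * w" unfolding L_len w_def using u3 by (simp add: powr_add)
  have fu: "real f < u" using f_lt unfolding u_def .
  have f1: "real f \<ge> 1" using f_ge by simp
  have alg: "real a * lg < w" using R_lis lg1 unfolding a_def lg_def w_def by (simp add: field_simps)
  have c_eq: "c = w / 200" unfolding c_def w_def ..
  have A1: "u ^ 3 * w \<le> 2 * lg * real (length L')" using L'_len lg1 unfolding NL lg_def by (simp add: field_simps)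
  have A2: "real (length L') \<le> 2 * real f * (real a * real d)"
    using L'R D(3) unfolding d_def by (metis (mono_tags) le_trans mult.assoc mult_le_mono2 of_nat_le_iff of_nat_mult of_nat_numeral)
  have "u ^ 3 * w \<le> 2 * lg * real (length L')" by (rule A1)
  also have "\<dots> \<le> 2 * lg * (2 * real f * (real a * real d))" using A2 lg1 by (intro mult_left_mono) auto
  also have "\<dots> = 4 * real f * real d * (real a * lg)" by (simp add: algebra_simps)
  also have "\<dots> < 4 * real f * real d * w" using alg dpos f1 by (intro mult_strict_left_mono) auto
  finally have B1: "u ^ 3 < 4 * real f * real d" using wpos by simp
  have B2: "real f * real d ^ 2 < 8 * real n * c"
  proof -
    have "real d * real d < 2 * real j * c * real d" using dc dpos by simp
    also have "\<dots> = 2 * c * (real j * real d)" by simp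
    also have "\<dots> \<le> 2 * c * (4 * real m)" using jd c_eq wpos
      by (intro mult_left_mono) (simp_all, metis of_nat_le_iff of_nat_mult of_nat_numeral)
    finally have dd: "real d * real d < 2 * c * (4 * real m)" .
    have fmr: "real f * real m \<le> real n" using fm by (metis of_nat_le_iff of_nat_mult)
    have "real f * real d ^ 2 = real f * (real d * real d)" by (simp add: power2_eq_square)
    also have "\<dots> < real f * (2 * c * (4 * real m))" using dd f1 by (intro mult_strict_left_mono) auto
    also have "\<dots> = 8 * c * (real f * real m)" by simp
    also have "\<dots> \<le> 8 * c * real n" using fmr c_eq wpos by (intro mult_left_mono) auto
    finally show ?thesis by (simp add: mult_ac)
  qed
  have "u ^ 6 < 16 * real f ^ 2 * real d ^ 2"
  proof -
    have "u ^ 6 = u^3 * u^3" by simp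
    also have "\<dots> < (4 * real f * real d) * (4 * real f * real d)"
      using B1 upos dpos f1 by (intro mult_strict_mono) auto
    finally show ?thesis by (simp add: power2_eq_square algebra_simps)
  qed
  also have "\<dots> = 16 * real f * (real f * real d ^ 2)" by (simp add: power2_eq_square)
  also have "\<dots> \<le> 16 * real f * (8 * real n * c)" using B2 f1 by (intro mult_left_mono) auto
  also have "\<dots> = 16 * real f * (8 * u^4 * w / 200)" using u4 c_eq by simp
  also have "\<dots> \<le> 16 * u * (8 * u^4 * u / 200)"
    using fu wu upos wpos f1 by (intro mult_mono) (auto intro: divide_right_mono)
  finally have "u ^ 6 < 16 * 8 / 200 * u ^ 6" by (simp add: algebra_simps power_numeral_reduce)
  thus False using upos by simp
qed

end
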